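(* Let $q\in(0,1)$ and let $\omega_{i,j}$ ($i,j\ge1$) be i.i.d. with $P(\omega_{i,j}=k)=(1-q)q^k$, $k=0,1,2,\dots$. Fix $N\ge1$ and $x=(x_1,\dots,x_N)\in\mathbb{W}_N=\{x\in\mathbb{Z}^N:x_1\le x_2\le\cdots\le x_N\}$. Define $G(0,n)=x_n$, $G(m,0)=0$ for $m\ge0$, and recursively $G(m,n)=\max\{G(m-1,n),G(m,n-1)\}+\omega_{m,n}$ for $m,n\ge1$, and let $G(m)=(G(m,1),\dots,G(m,N))$. Then for every integer $m\ge1$ and $y\in\mathbb{W}_N$, $$P(G(m)=y\mid G(0)=x)=\det\big[F_{i-j}(\tilde y_{N+1-i}-\tilde x_{N+1-j})\big]_{i,j=1}^N,$$ where $\tilde x_j=-x_j-j$ and $\tilde y_j=-y_j-j$.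
   Context: $w_m(x)=\binom{x+m-1}{m-1}q^x(1-q)^m\mathbf{1}_{x\ge0}$ is the $m$-step distribution of a random walk with $\mathrm{Geom}(1-q)$ steps. $\nabla f(x)=f(x+1)-f(x)$ with inverse $\nabla^{-1}f(x)=\sum_{y<x}f(y)$; for $n\in\mathbb{Z}$, $H_n=\nabla^n w_m$ and $F_n(x)=H_{-n}(n-x)$. Equivalently $H_n(x)=\frac{(-1)^{n-1}}{2\pi\mathbf{i}}\oint_{|z|=r>1}\frac{z^n(1-z)^{m+x-1}}{(1-\frac{z}{1-q})^m}dz$. It is known (Johansson) that $P(G(m)=y\mid G(0)=x)=\det[\nabla^{j-i}w_m(y_j-x_i)]$.
   Formalization: The boundary condition G(m,0)=0 is replaced by a boundary at minus infinity, so $G(m,1)=G(m-1,1)+\omega_{m,1}$ for $m\ge1$. The statement above fails without it. *)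

theory Defs
  imports "HOL-Probability.Probability" "Jordan_Normal_Form.Determinant"
begin

text \<open>The m-step distribution of a random walk with Geom(1-q) steps.\<close>
definition w :: "real \<Rightarrow> nat \<Rightarrow> int \<Rightarrow> real" where
  "w q m x = (if x \<ge> 0 then real ((nat x + m - 1) choose (m - 1)) * q ^ nat x * (1 - q) ^ m else 0)"

definition nabla :: "(int \<Rightarrow> real) \<Rightarrow> int \<Rightarrow> real" where
  "nabla f x = f (x + 1) - f x"

definition nabla_inv :: "(int \<Rightarrow> real) \<Rightarrow> int \<Rightarrow> real" where
  "nabla_inv f x = (\<Sum>\<^sub>\<infinity> y\<in>{..<x}. f y)"

definition H :: "real \<Rightarrow> nat \<Rightarrow> int \<Rightarrow> int \<Rightarrow> real" where
  "H q m n = (if n \<ge> 0 then (nabla ^^ nat n) (w q m) else (nabla_inv ^^ nat (- n)) (w q m))"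

definition F :: "real \<Rightarrow> nat \<Rightarrow> int \<Rightarrow> int \<Rightarrow> real" where
  "F q m n x = H q m (- n) (n - x)"

text \<open>G(0,n) = x_n; G(m,n) = max(G(m-1,n), G(m,n-1)) + omega(m,n) for n >= 2 and
  G(m,1) = G(m-1,1) + omega(m,1) (boundary column G(m,0) acting as -infinity).  The value at (Suc m, 0) is irrelevant.\<close>
fun LPP :: "(nat \<times> nat \<Rightarrow> nat) \<Rightarrow> (nat \<Rightarrow> int) \<Rightarrow> nat \<Rightarrow> nat \<Rightarrow> int" where
  "LPP \<omega> x 0 n = x n"
| "LPP \<omega> x (Suc m) 0 = 0"
| "LPP \<omega> x (Suc m) (Suc n) =
     (if n = 0 then LPP \<omega> x m 1 else max (LPP \<omega> x m (Suc n)) (LPP \<omega> x (Suc m) n))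
     + int (\<omega> (Suc m, Suc n))"

definition weyl :: "nat \<Rightarrow> (nat \<Rightarrow> int) \<Rightarrow> bool" where
  "weyl N x \<longleftrightarrow> (\<forall>i j. 1 \<le> i \<longrightarrow> i \<le> j \<longrightarrow> j \<le> N \<longrightarrow> x i \<le> x j)"

definition tilde :: "(nat \<Rightarrow> int) \<Rightarrow> nat \<Rightarrow> int" where
  "tilde x j = - x j - int j"

text \<open>i.i.d. weights P(omega = k) = (1-q) q^k on the box {1..m} x {1..N}
  (the event G(m) = y only depends on these weights).\<close>
definition weights :: "real \<Rightarrow> nat \<Rightarrow> nat \<Rightarrow> (nat \<times> nat \<Rightarrow> nat) pmf" where
  "weights q m N = Pi_pmf ({1..m} \<times> {1..N}) 0 (\<lambda>_. geometric_pmf (1 - q))"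

end

theory Submission
  imports Defs
begin

definition Hf :: "(int \<Rightarrow> real) \<Rightarrow> int \<Rightarrow> int \<Rightarrow> real" where
  "Hf f n = (if n \<ge> 0 then (nabla ^^ nat n) f else (nabla_inv ^^ nat (- n)) f)"

definition lsupp :: "(int \<Rightarrow> real) \<Rightarrow> int \<Rightarrow> bool" where
  "lsupp g L \<longleftrightarrow> (\<forall>t<L. g t = 0)"

lemma H_Hf: "H q m = Hf (w q m)"
  by (simp add: H_def Hf_def fun_eq_iff)

lemma nabla_inv_fin:
  assumes "lsupp g L"
  shows "nabla_inv g x = (\<Sum>y\<in>{L..<x}. g y)"
proof -
  have "nabla_inv g x = infsum g {L..<x}"
    unfolding nabla_inv_def
    by (rule infsum_cong_neutral) (use assms in \<open>auto simp: lsupp_def\<close>)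
  then show ?thesis by simp
qed

lemma nabla_inv_step:
  assumes "lsupp g L"
  shows "nabla_inv g (t+1) = nabla_inv g t + g t"
proof (cases "t < L")
  case True
  then show ?thesis using assms by (simp add: nabla_inv_fin lsupp_def)
next
  case False
  then have "{L..<t+1} = insert t {L..<t}" by auto
  then show ?thesis using assms by (simp add: nabla_inv_fin add.commute)
qed

lemma nabla_inv_lsupp: "lsupp g L \<Longrightarrow> lsupp (nabla_inv g) L"
  by (simp add: lsupp_def nabla_inv_fin)

lemma nabla_lsupp: "lsupp g L \<Longrightarrow> lsupp (nabla g) (L - 1)"
  by (simp add: lsupp_def nabla_def)

lemma lsupp_mono: "lsupp g L \<Longrightarrow> L' \<le> L \<Longrightarrow> lsupp g L'"
  by (simp add: lsupp_def)

lemma nabla_nabla_inv: "lsupp g L \<Longrightarrow> nabla (nabla_inv g) = g"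
  by (simp add: fun_eq_iff nabla_def nabla_inv_step)

lemma Hf_0: "Hf f 0 = f" by (simp add: Hf_def)

lemma Hf_lsupp_pos: "lsupp f 0 \<Longrightarrow> lsupp ((nabla ^^ j) f) (- int j)"
proof (induction j)
  case 0 then show ?case by simp
next
  case (Suc j)
  then have "lsupp (nabla ((nabla ^^ j) f)) (- int j - 1)" by (intro nabla_lsupp) simp
  moreover have "- int j - 1 = - int (Suc j)" by simp
  ultimately show ?case by simp
qed

lemma Hf_lsupp_neg: "lsupp f 0 \<Longrightarrow> lsupp ((nabla_inv ^^ j) f) 0"
  by (induction j) (auto dest: nabla_inv_lsupp)

lemma Hf_lsupp: "lsupp f 0 \<Longrightarrow> lsupp (Hf f k) (- \<bar>k\<bar>)"
proof (cases "k \<ge> 0")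
  case True
  assume "lsupp f 0"
  then show ?thesis using True Hf_lsupp_pos[of f "nat k"] by (simp add: Hf_def)
next
  case False
  assume "lsupp f 0"
  then show ?thesis using False Hf_lsupp_neg[of f "nat (-k)"]
    by (auto simp: Hf_def intro: lsupp_mono)
qed

lemma Hf_pred: "k \<le> 0 \<Longrightarrow> Hf f (k - 1) = nabla_inv (Hf f k)"
proof -
  assume k: "k \<le> 0"
  have "nat (-(k-1)) = Suc (nat (-k))" using k by simp
  then show ?thesis using k by (cases "k = 0") (auto simp: Hf_def)
qed

lemma Hf_succ: assumes "lsupp f 0" shows "Hf f (k + 1) = nabla (Hf f k)"
proof (cases "k \<ge> 0")
  case True
  then have "nat (k+1) = Suc (nat k)" by simp
  then show ?thesis using True by (simp add: Hf_def)
next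
  case False
  then have "Hf f k = nabla_inv (Hf f (k+1))" using Hf_pred[of "k+1" f] by simp
  then show ?thesis using nabla_nabla_inv[OF Hf_lsupp[OF assms, of "k+1"]] by simp
qed

lemma const_zero:
  fixes A :: "int \<Rightarrow> real"
  assumes s: "\<And>t. A (t+1) = A t" and z: "A t0 = 0"
  shows "A t = 0"
proof (induction t rule: int_induct[of _ t0])
  case base then show ?case using z by simp
next
  case (step1 i) then show ?case using s[of i] by simp
next
  case (step2 i) then show ?case using s[of "i-1"] by simp
qed

lemma Hf_rec:
  assumes f: "lsupp f 0" and f': "lsupp f' 0"
    and rec: "\<And>t. f' t = q * f' (t-1) + (1-q) * f t"
  shows "Hf f' k t = q * Hf f' k (t-1) + (1-q) * Hf f k t"
proof (cases "k \<ge> 0")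
  case True
  have "\<forall>t. Hf f' (int j) t = q * Hf f' (int j) (t-1) + (1-q) * Hf f (int j) t" for j
  proof (induction j)
    case 0 then show ?case by (simp only: of_nat_0 minus_zero Hf_0) (intro allI rec)
  next
    case (Suc j)
    have e: "int (Suc j) = int j + 1" by simp
    show ?case
    proof
      fix t
      have a: "Hf f' (int j) (t+1) = q * Hf f' (int j) t + (1-q) * Hf f (int j) (t+1)"
        using Suc[rule_format, of "t+1"] by simp
      have b: "Hf f' (int j) t = q * Hf f' (int j) (t-1) + (1-q) * Hf f (int j) t"
        using Suc[rule_format, of t] by simp
      show "Hf f' (int (Suc j)) t = q * Hf f' (int (Suc j)) (t - 1) + (1 - q) * Hf f (int (Suc j)) t"
        unfolding e Hf_succ[OF f] Hf_succ[OF f'] nabla_def right_diff_distrib diff_add_cancel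
        using a b by linarith
    qed
  qed
  moreover have "k = int (nat k)" using True by simp
  ultimately show ?thesis by metis
next
  case False
  have "\<forall>t. Hf f' (- int j) t = q * Hf f' (- int j) (t-1) + (1-q) * Hf f (- int j) t" for j
  proof (induction j)
    case 0 then show ?case by (simp only: of_nat_0 minus_zero Hf_0) (intro allI rec)
  next
    case (Suc j)
    have e: "- int (Suc j) = - int j - 1" by simp
    define G where "G = Hf f (- int j)"
    define G' where "G' = Hf f' (- int j)"
    have lG: "lsupp G (- int j)" unfolding G_def using Hf_lsupp[OF f, of "- int j"] by simp
    have lG': "lsupp G' (- int j)" unfolding G'_def using Hf_lsupp[OF f', of "- int j"] by simp
    have IH: "G' t = q * G' (t-1) + (1-q) * G t" for t using Suc.IH unfolding G_def G'_def by blast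
    define A where "A t = nabla_inv G' t - q * nabla_inv G' (t-1) - (1-q) * nabla_inv G t" for t
    have step: "A (t+1) = A t" for t
    proof -
      have s1: "nabla_inv G' (t+1) = nabla_inv G' t + G' t" by (rule nabla_inv_step[OF lG'])
      have s2: "nabla_inv G' t = nabla_inv G' (t-1) + G' (t-1)"
        using nabla_inv_step[OF lG', of "t-1"] by simp
      have s3: "nabla_inv G (t+1) = nabla_inv G t + G t" by (rule nabla_inv_step[OF lG])
      have "A (t+1) = nabla_inv G' (t+1) - q * nabla_inv G' t - (1-q) * nabla_inv G (t+1)"
        unfolding A_def by simp
      also have "\<dots> = A t"
        unfolding A_def s1 s3 using s2 IH[of t] by (simp add: algebra_simps)
      finally show "A (t+1) = A t" .
    qed
    have base: "A (- int j - 1) = 0" unfolding A_def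
      using nabla_inv_lsupp[OF lG] nabla_inv_lsupp[OF lG'] by (simp add: lsupp_def)
    have "A t = 0" for t by (rule const_zero[OF step base])
    then have eq: "\<forall>t. nabla_inv G' t = q * nabla_inv G' (t-1) + (1-q) * nabla_inv G t"
      unfolding A_def by (simp add: algebra_simps)
    have hs: "Hf f (- int (Suc j)) = nabla_inv G" "Hf f' (- int (Suc j)) = nabla_inv G'"
      unfolding e G_def G'_def by (simp_all add: Hf_pred)
    show ?case unfolding hs using eq by blast
  qed
  moreover have "k = - int (nat (-k))" using False by simp
  ultimately show ?thesis by metis
qed

lemma sum_int_top: fixes L Y :: int shows "L \<le> Y + 1 \<Longrightarrow> (\<Sum>u\<in>{L..Y+1}. g u) = (\<Sum>u\<in>{L..Y}. g u) + g (Y+1)"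
proof -
  assume "L \<le> Y + 1"
  then have "{L..Y+1} = insert (Y+1) {L..Y}" using atLeastAtMostPlus1_int_conv[of L Y] by (simp add: add.commute)
  then show ?thesis by (simp add: add.commute)
qed

lemma wsum_step:
  fixes q :: real
  assumes "L \<le> T + 1"
  shows "(\<Sum>u\<in>{L..T+1}. q ^ nat (T+1-u) * h u) = q * (\<Sum>u\<in>{L..T}. q ^ nat (T-u) * h u) + h (T+1)"
proof -
  have "(\<Sum>u\<in>{L..T}. q ^ nat (T+1-u) * h u) = (\<Sum>u\<in>{L..T}. q * (q ^ nat (T-u) * h u))"
  proof (rule sum.cong)
    fix u assume "u \<in> {L..T}"
    then have "nat (T+1-u) = Suc (nat (T-u))" by auto
    then show "q ^ nat (T+1-u) * h u = q * (q ^ nat (T-u) * h u)" by simp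
  qed simp
  then show ?thesis using sum_int_top[OF assms, of "\<lambda>u. q ^ nat (T+1-u) * h u"]
    by (simp add: sum_distrib_left)
qed

lemma int_from_induct:
  fixes k :: int
  assumes "k \<le> i" "P k" "\<And>i. k \<le> i \<Longrightarrow> P i \<Longrightarrow> P (i+1)"
  shows "P i"
  using assms by (induction i rule: int_ge_induct) auto

lemma conv_sum:
  fixes q :: real
  assumes g0: "\<And>u. u \<le> L \<Longrightarrow> g u = 0" and g'0: "\<And>u. u \<le> L \<Longrightarrow> g' u = 0"
    and rec: "\<And>u. g' u = q * g' (u-1) + (1-q) * g u"
  shows "(\<Sum>u\<in>{L..Y}. (1-q) * q ^ nat (Y-u) * g u) = g' Y"
proof (cases "Y < L")
  case True
  then show ?thesis using g'0[of Y] by simp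
next
  case False
  have "(\<Sum>u\<in>{L..Y}. q ^ nat (Y-u) * ((1-q) * g u)) = g' Y"
  proof (rule int_from_induct[of L Y])
    show "L \<le> Y" using False by simp
    show "(\<Sum>u\<in>{L..L}. q ^ nat (L-u) * ((1-q) * g u)) = g' L" using g0[of L] g'0[of L] by simp
  next
    fix i assume i: "L \<le> i" and IH: "(\<Sum>u\<in>{L..i}. q ^ nat (i-u) * ((1-q) * g u)) = g' i"
    show "(\<Sum>u\<in>{L..i+1}. q ^ nat (i+1-u) * ((1-q) * g u)) = g' (i+1)"
      using wsum_step[of L i q "\<lambda>u. (1-q) * g u"] i IH rec[of "i+1"] by simp
  qed
  then show ?thesis by (simp add: ac_simps)
qed

lemma telesc:
  fixes C :: "int \<Rightarrow> real"
  assumes "lo \<le> T + 1"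
  shows "(\<Sum>u\<in>{lo..T}. C (u+1) - C u) = C (T+1) - C lo"
proof (rule int_from_induct[of "lo - 1" T])
  show "lo - 1 \<le> T" using assms by simp
  show "(\<Sum>u\<in>{lo..lo-1}. C (u+1) - C u) = C (lo - 1 + 1) - C lo" by simp
next
  fix i assume i: "lo - 1 \<le> i" and IH: "(\<Sum>u\<in>{lo..i}. C (u+1) - C u) = C (i+1) - C lo"
  show "(\<Sum>u\<in>{lo..i+1}. C (u+1) - C u) = C (i+1+1) - C lo"
    using sum_int_top[of lo i "\<lambda>u. C (u+1) - C u"] i IH by simp
qed

lemma wtelesc:
  fixes C :: "int \<Rightarrow> real" and q :: real
  assumes C0: "C L = 0" and T: "L \<le> T + 1"
  shows "(\<Sum>u\<in>{L..T}. q ^ nat (T-u) * (C (u+1) - C u))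
       = C (T+1) - (1-q) * (\<Sum>u\<in>{L..T}. q ^ nat (T-u) * C u)"
proof (rule int_from_induct[of "L - 1" T])
  show "L - 1 \<le> T" using T by simp
  show "(\<Sum>u\<in>{L..L-1}. q ^ nat (L - 1 - u) * (C (u+1) - C u))
       = C (L - 1 + 1) - (1-q) * (\<Sum>u\<in>{L..L-1}. q ^ nat (L - 1 - u) * C u)" using C0 by simp
next
  fix i assume i: "L - 1 \<le> i"
    and IH: "(\<Sum>u\<in>{L..i}. q ^ nat (i-u) * (C (u+1) - C u))
       = C (i+1) - (1-q) * (\<Sum>u\<in>{L..i}. q ^ nat (i-u) * C u)"
  have a: "(\<Sum>u\<in>{L..i+1}. q ^ nat (i+1-u) * (C (u+1) - C u))
     = q * (\<Sum>u\<in>{L..i}. q ^ nat (i-u) * (C (u+1) - C u)) + (C (i+1+1) - C (i+1))"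
    using wsum_step[of L i q "\<lambda>u. C (u+1) - C u"] i by simp
  have b: "(\<Sum>u\<in>{L..i+1}. q ^ nat (i+1-u) * C u) = q * (\<Sum>u\<in>{L..i}. q ^ nat (i-u) * C u) + C (i+1)"
    using wsum_step[of L i q C] i by simp
  show "(\<Sum>u\<in>{L..i+1}. q ^ nat (i+1-u) * (C (u+1) - C u))
       = C (i+1+1) - (1-q) * (\<Sum>u\<in>{L..i+1}. q ^ nat (i+1-u) * C u)"
    unfolding a b IH by (simp add: algebra_simps)
qed

lemma row_identity:
  fixes C :: "int \<Rightarrow> real" and q :: real
  assumes C0: "C L = 0" and lo: "L \<le> lo" "lo \<le> Y'" and Y: "Y' \<le> Y"
  shows "(\<Sum>u\<in>{lo..Y}. q ^ nat (Y - max u Y') * (C (u+1) - C u))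
    = (\<Sum>u\<in>{L..Y}. q ^ nat (Y-u) * (C (u+1) - C u))
      + (1-q) * q ^ nat (Y - Y') * (\<Sum>u\<in>{L..Y'}. q ^ nat (Y'-u) * C u)
      - q ^ nat (Y - Y') * C lo"
proof -
  let ?d = "\<lambda>u. C (u+1) - C u"
  have split1: "{lo..Y} = {lo..Y'} \<union> {Y'+1..Y}" and disj1: "{lo..Y'} \<inter> {Y'+1..Y} = {}"
    using lo Y by auto
  have split2: "{L..Y} = {L..Y'} \<union> {Y'+1..Y}" and disj2: "{L..Y'} \<inter> {Y'+1..Y} = {}"
    using lo Y by auto
  have p1: "(\<Sum>u\<in>{lo..Y'}. q ^ nat (Y - max u Y') * ?d u) = q ^ nat (Y - Y') * (C (Y'+1) - C lo)"
  proof -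
    have "(\<Sum>u\<in>{lo..Y'}. q ^ nat (Y - max u Y') * ?d u) = (\<Sum>u\<in>{lo..Y'}. q ^ nat (Y - Y') * ?d u)"
      by (rule sum.cong) auto
    also have "\<dots> = q ^ nat (Y - Y') * (C (Y'+1) - C lo)"
      using telesc[of lo Y' C] lo by (simp add: sum_distrib_left[symmetric])
    finally show ?thesis .
  qed
  have p2: "(\<Sum>u\<in>{Y'+1..Y}. q ^ nat (Y - max u Y') * ?d u) = (\<Sum>u\<in>{Y'+1..Y}. q ^ nat (Y - u) * ?d u)"
    by (rule sum.cong) auto
  have p3: "(\<Sum>u\<in>{L..Y'}. q ^ nat (Y - u) * ?d u) = q ^ nat (Y - Y') * (\<Sum>u\<in>{L..Y'}. q ^ nat (Y' - u) * ?d u)"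
  proof -
    have "(\<Sum>u\<in>{L..Y'}. q ^ nat (Y - u) * ?d u) = (\<Sum>u\<in>{L..Y'}. q ^ nat (Y - Y') * (q ^ nat (Y' - u) * ?d u))"
    proof (rule sum.cong)
      fix u assume "u \<in> {L..Y'}"
      then have "nat (Y - u) = nat (Y - Y') + nat (Y' - u)" using Y by auto
      then show "q ^ nat (Y - u) * ?d u = q ^ nat (Y - Y') * (q ^ nat (Y' - u) * ?d u)"
        by (simp add: power_add)
    qed simp
    then show ?thesis by (simp add: sum_distrib_left)
  qed
  have w: "(\<Sum>u\<in>{L..Y'}. q ^ nat (Y' - u) * ?d u) = C (Y'+1) - (1-q) * (\<Sum>u\<in>{L..Y'}. q ^ nat (Y'-u) * C u)"
    using wtelesc[of C L Y' q] C0 lo by simp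
  have "(\<Sum>u\<in>{lo..Y}. q ^ nat (Y - max u Y') * ?d u)
      = q ^ nat (Y - Y') * (C (Y'+1) - C lo) + (\<Sum>u\<in>{Y'+1..Y}. q ^ nat (Y - u) * ?d u)"
    unfolding split1 by (subst sum.union_disjoint) (use disj1 p1 p2 in auto)
  moreover have "(\<Sum>u\<in>{L..Y}. q ^ nat (Y-u) * ?d u)
      = q ^ nat (Y - Y') * (C (Y'+1) - (1-q) * (\<Sum>u\<in>{L..Y'}. q ^ nat (Y'-u) * C u))
        + (\<Sum>u\<in>{Y'+1..Y}. q ^ nat (Y - u) * ?d u)"
    unfolding split2 by (subst sum.union_disjoint) (use disj2 p3 w in auto)
  ultimately show ?thesis by (simp add: algebra_simps)
qed

definition detr :: "nat \<Rightarrow> (nat \<Rightarrow> nat \<Rightarrow> real) \<Rightarrow> real" where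
  "detr n \<rho> = det (mat n n (\<lambda>(i,j). \<rho> i j))"

lemma detr_formula:
  "detr n \<rho> = (\<Sum>p\<in>{p. p permutes {0..<n}}. signof p * (\<Prod>i=0..<n. \<rho> i (p i)))"
  unfolding detr_def
proof (subst det_def'[of _ n])
  show "mat n n (\<lambda>(i, j). \<rho> i j) \<in> carrier_mat n n" by simp
  show "(\<Sum>p\<in>{p. p permutes {0..<n}}. signof p * (\<Prod>i = 0..<n. mat n n (\<lambda>(i, j). \<rho> i j) $$ (i, p i))) =
    (\<Sum>p\<in>{p. p permutes {0..<n}}. signof p * (\<Prod>i = 0..<n. \<rho> i (p i)))"
  proof (rule sum.cong[OF refl])
    fix p assume "p \<in> {p. p permutes {0..<n}}"
    then have "i < n \<Longrightarrow> p i < n" for i by (auto dest: permutes_in_image)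
    then show "signof p * (\<Prod>i = 0..<n. mat n n (\<lambda>(i, j). \<rho> i j) $$ (i, p i)) =
         signof p * (\<Prod>i = 0..<n. \<rho> i (p i))" by (auto intro!: prod.cong)
  qed
qed

lemma detr_cong:
  assumes "\<And>i j. i < n \<Longrightarrow> j < n \<Longrightarrow> \<rho> i j = \<rho>' i j"
  shows "detr n \<rho> = detr n \<rho>'"
  unfolding detr_def by (rule arg_cong[of _ _ det]) (rule eq_matI, auto simp: assms)

lemma detr_upd:
  assumes k: "k < n"
  shows "detr n (\<rho>(k := v)) = (\<Sum>p\<in>{p. p permutes {0..<n}}. signof p * (v (p k) * (\<Prod>i\<in>{0..<n}-{k}. \<rho> i (p i))))"
  unfolding detr_formula
proof (rule sum.cong[OF refl])
  fix p
  have "(\<Prod>i=0..<n. (\<rho>(k := v)) i (p i)) = (\<rho>(k := v)) k (p k) * (\<Prod>i\<in>{0..<n}-{k}. (\<rho>(k := v)) i (p i))"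
    using k by (subst prod.remove[of _ k]) auto
  also have "\<dots> = v (p k) * (\<Prod>i\<in>{0..<n}-{k}. \<rho> i (p i))" by (auto intro!: prod.cong)
  finally show "signof p * (\<Prod>i=0..<n. (\<rho>(k := v)) i (p i)) = signof p * (v (p k) * (\<Prod>i\<in>{0..<n}-{k}. \<rho> i (p i)))"
    by simp
qed

lemma detr_lin:
  assumes k: "k < n"
  shows "detr n (\<rho>(k := (\<lambda>b. a * v b + c * v' b))) = a * detr n (\<rho>(k := v)) + c * detr n (\<rho>(k := v'))"
  unfolding detr_upd[OF k] by (simp add: sum_distrib_left sum.distrib[symmetric] algebra_simps)

lemma detr_sum:
  assumes k: "k < n"
  shows "detr n (\<rho>(k := (\<lambda>b. \<Sum>u\<in>S. g u b))) = (\<Sum>u\<in>S. detr n (\<rho>(k := g u)))"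
  unfolding detr_upd[OF k] by (simp add: sum_distrib_left sum_distrib_right sum.swap[of _ S] algebra_simps)

lemma detr_identical:
  assumes "k < n" "l < n" "k \<noteq> l" "\<rho> k = \<rho> l"
  shows "detr n \<rho> = 0"
  unfolding detr_def
  by (rule det_identical_rows[of _ n k l]) (use assms in auto)

lemma detr_rowadd:
  assumes "k < n" "l < n" "k \<noteq> l"
  shows "detr n (\<rho>(k := (\<lambda>b. \<rho> k b + c * \<rho> l b))) = detr n \<rho>"
proof -
  have "detr n (\<rho>(k := (\<lambda>b. 1 * \<rho> k b + c * \<rho> l b))) = 1 * detr n (\<rho>(k := \<rho> k)) + c * detr n (\<rho>(k := \<rho> l))"
    by (rule detr_lin[OF assms(1)])
  moreover have "detr n (\<rho>(k := \<rho> l)) = 0"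
    by (rule detr_identical[of k n l]) (use assms in auto)
  ultimately show ?thesis by simp
qed

lemma detr_smult: "detr n (\<lambda>i j. c * \<rho> i j) = c ^ n * detr n \<rho>"
  unfolding detr_formula by (simp add: prod.distrib sum_distrib_left algebra_simps)

lemma detr_zero_row:
  assumes "k < n" "\<And>j. j < n \<Longrightarrow> \<rho> k j = 0"
  shows "detr n \<rho> = 0"
proof -
  have "detr n \<rho> = detr n (\<rho>(k := (\<lambda>b. 0 * \<rho> k b + 0 * \<rho> k b)))"
    by (rule detr_cong) (use assms in auto)
  also have "\<dots> = 0" by (subst detr_lin[OF assms(1)]) simp
  finally show ?thesis .
qed

lemma detr_last_col:
  assumes "\<And>i. i < n \<Longrightarrow> \<rho> i n = 0"
  shows "detr (Suc n) \<rho> = \<rho> n n * detr n \<rho>"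
proof -
  let ?A = "mat (Suc n) (Suc n) (\<lambda>(i,j). \<rho> i j)"
  have A: "?A \<in> carrier_mat (Suc n) (Suc n)" by simp
  have "det ?A = (\<Sum>i<Suc n. ?A $$ (i,n) * cofactor ?A i n)"
    by (rule laplace_expansion_column[OF A]) simp
  also have "\<dots> = ?A $$ (n,n) * cofactor ?A n n"
    by (subst sum.remove[of _ n]) (auto simp: assms intro!: sum.neutral)
  also have "mat_delete ?A n n = mat n n (\<lambda>(i,j). \<rho> i j)"
    by (rule eq_matI) (auto simp: mat_delete_def)
  then have "cofactor ?A n n = detr n \<rho>"
    unfolding cofactor_def detr_def by simp
  finally show ?thesis unfolding detr_def by simp
qed

definition revp :: "nat \<Rightarrow> nat \<Rightarrow> nat" where
  "revp n i = (if i < n then n - 1 - i else i)"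

lemma revp_permutes: "revp n permutes {0..<n}"
proof (rule bij_imp_permutes)
  have inv: "\<And>i. revp n (revp n i) = i" by (auto simp: revp_def)
  show "bij_betw (revp n) {0..<n} {0..<n}"
    by (rule bij_betw_byWitness[where f'="revp n"]) (auto simp: inv, auto simp: revp_def)
  show "\<And>x. x \<notin> {0..<n} \<Longrightarrow> revp n x = x" by (auto simp: revp_def)
qed

lemma signof_sq: "signof p * signof p = (1::real)"
  by (simp add: sign_def)

lemma detr_rev: "detr n (\<lambda>i j. \<rho> (n - 1 - i) (n - 1 - j)) = detr n \<rho>"
proof -
  let ?r = "revp n"
  let ?A = "mat n n (\<lambda>(i,j). \<rho> i j)"
  let ?B = "mat n n (\<lambda>(i,j). ?A $$ (?r i, j))"
  have rl: "i < n \<Longrightarrow> ?r i < n" for i by (auto simp: revp_def)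
  have dB: "det ?B = signof ?r * det ?A"
    by (rule det_permute_rows[OF _ revp_permutes]) simp
  let ?Bt = "transpose_mat ?B"
  have dBt: "det ?Bt = det ?B" by (rule det_transpose[of _ n]) simp
  let ?C = "mat n n (\<lambda>(i,j). ?Bt $$ (?r i, j))"
  have dC: "det ?C = signof ?r * det ?Bt"
    by (rule det_permute_rows[OF _ revp_permutes]) simp
  have dCt: "det (transpose_mat ?C) = det ?C" by (rule det_transpose[of _ n]) simp
  have "transpose_mat ?C = mat n n (\<lambda>(i,j). \<rho> (n - 1 - i) (n - 1 - j))"
    by (rule eq_matI) (auto simp: rl revp_def)
  then have "detr n (\<lambda>i j. \<rho> (n - 1 - i) (n - 1 - j)) = det (transpose_mat ?C)"
    unfolding detr_def by simp
  also have "\<dots> = (signof ?r * signof ?r) * det ?A" using dCt dC dBt dB by simp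
  finally show ?thesis unfolding signof_sq detr_def by simp
qed

definition delta :: "int \<Rightarrow> real" where "delta t = (if t = 0 then 1 else 0)"

lemma delta_lsupp: "lsupp delta 0" by (simp add: lsupp_def delta_def)

lemma nabla_pow_delta_pos: "t > 0 \<Longrightarrow> (nabla ^^ j) delta t = 0"
  by (induction j arbitrary: t) (auto simp: delta_def nabla_def)

lemma Hf_delta_pos: "k \<ge> 0 \<Longrightarrow> t > 0 \<Longrightarrow> Hf delta k t = 0"
  by (simp add: Hf_def nabla_pow_delta_pos)

lemma Hf_delta_neg:
  assumes "k < 0" "t \<le> 0" shows "Hf delta k t = 0"
proof -
  have "nat (-k) > 0" using assms by simp
  then obtain j where j: "nat (-k) = Suc j" using gr0_implies_Suc by blast
  have "Hf delta k t = nabla_inv ((nabla_inv ^^ j) delta) t" using assms j by (simp add: Hf_def)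
  also have "\<dots> = 0" using nabla_inv_fin[OF Hf_lsupp_neg[OF delta_lsupp, of j]] assms by simp
  finally show ?thesis .
qed

lemma weyl_less: "weyl (Suc n) x \<Longrightarrow> weyl n x"
  by (simp add: weyl_def)

lemma det_delta:
  assumes "weyl n x" "weyl n z"
  shows "detr n (\<lambda>a b. Hf delta (int a - int b) (z (Suc a) - x (Suc b))) = (if \<forall>i\<in>{1..n}. z i = x i then 1 else 0)"
  using assms
proof (induction n)
  case 0
  then show ?case by (simp add: detr_def)
next
  case (Suc n)
  let ?E = "\<lambda>a b. Hf delta (int a - int b) (z (Suc a) - x (Suc b))"
  have xm: "b < Suc n \<Longrightarrow> x (Suc b) \<le> x (Suc n)" for b using Suc.prems(1) by (auto simp: weyl_def)
  have zm: "a < Suc n \<Longrightarrow> z (Suc a) \<le> z (Suc n)" for a using Suc.prems(2) by (auto simp: weyl_def)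
  show ?case
  proof (cases "z (Suc n) > x (Suc n)")
    case True
    have "detr (Suc n) ?E = 0"
    proof (rule detr_zero_row[of n])
      fix j assume "j < Suc n"
      then show "?E n j = 0" using xm[of j] True by (intro Hf_delta_pos) auto
    qed simp
    moreover have "\<not> (\<forall>i\<in>{1..Suc n}. z i = x i)" using True by force
    ultimately show ?thesis by simp
  next
    case False
    have d: "detr (Suc n) ?E = ?E n n * detr n ?E"
    proof (rule detr_last_col)
      fix i assume "i < n"
      then show "?E i n = 0" using zm[of i] False by (intro Hf_delta_neg) auto
    qed
    have i: "detr n ?E = (if \<forall>i\<in>{1..n}. z i = x i then 1 else 0)"
      using Suc.IH Suc.prems weyl_less by blast
    have e: "?E n n = delta (z (Suc n) - x (Suc n))" by (simp add: Hf_0)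
    have iff: "(\<forall>i\<in>{1..Suc n}. z i = x i) \<longleftrightarrow> (\<forall>i\<in>{1..n}. z i = x i) \<and> z (Suc n) = x (Suc n)"
      by (auto simp: atLeastAtMostSuc_conv)
    show ?thesis unfolding d i e iff by (simp add: delta_def)
  qed
qed

definition lob :: "int \<Rightarrow> (nat \<Rightarrow> int) \<Rightarrow> nat \<Rightarrow> int" where
  "lob L z n = (if n = 1 then L else z (n - 1))"

definition DomSet :: "int \<Rightarrow> (nat \<Rightarrow> int) \<Rightarrow> nat \<Rightarrow> (nat \<Rightarrow> int) set" where
  "DomSet L y k = {z. (\<forall>n. (n = 0 \<or> k < n) \<longrightarrow> z n = 0) \<and> (\<forall>n\<in>{1..k}. lob L z n \<le> z n \<and> z n \<le> y n)}"

lemma DomSet_0: "DomSet L y 0 = {\<lambda>_. 0}"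
  by (auto simp: DomSet_def fun_eq_iff)

lemma DomSet_Suc:
  "DomSet L y (Suc k) = (\<lambda>(z,u). z(Suc k := u)) ` (SIGMA z:DomSet L y k. {lob L z (Suc k)..y (Suc k)})"
proof (intro equalityI subsetI)
  fix z assume z: "z \<in> DomSet L y (Suc k)"
  let ?z0 = "z(Suc k := 0)"
  have l: "lob L ?z0 (Suc k) = lob L z (Suc k)" by (simp add: lob_def)
  have ln: "n \<in> {1..k} \<Longrightarrow> lob L ?z0 n = lob L z n" for n by (auto simp: lob_def)
  have "?z0 \<in> DomSet L y k" using z ln by (auto simp: DomSet_def)
  moreover have "z (Suc k) \<in> {lob L ?z0 (Suc k)..y (Suc k)}" using z l by (auto simp: DomSet_def)
  moreover have "z = ?z0(Suc k := z (Suc k))" by simp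
  ultimately show "z \<in> (\<lambda>(z,u). z(Suc k := u)) ` (SIGMA z:DomSet L y k. {lob L z (Suc k)..y (Suc k)})"
    by (intro image_eqI[of _ _ "(?z0, z (Suc k))"]) auto
next
  fix z' assume "z' \<in> (\<lambda>(z,u). z(Suc k := u)) ` (SIGMA z:DomSet L y k. {lob L z (Suc k)..y (Suc k)})"
  then obtain z u where z: "z \<in> DomSet L y k" and u: "u \<in> {lob L z (Suc k)..y (Suc k)}" and z': "z' = z(Suc k := u)"
    by auto
  have ln: "n \<in> {1..Suc k} \<Longrightarrow> lob L z' n = lob L z n" for n
    using z' by (auto simp: lob_def)
  have A: "\<forall>n. (n = 0 \<or> Suc k < n) \<longrightarrow> z' n = 0" using z z' by (auto simp: DomSet_def)
  have B: "\<forall>n\<in>{1..Suc k}. lob L z' n \<le> z' n \<and> z' n \<le> y n"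
  proof
    fix n assume n: "n \<in> {1..Suc k}"
    show "lob L z' n \<le> z' n \<and> z' n \<le> y n"
    proof (cases "n = Suc k")
      case True then show ?thesis using u z' ln[OF n] by simp
    next
      case False then have "n \<in> {1..k}" using n by auto
      then show ?thesis using z z' ln[OF n] False by (auto simp: DomSet_def)
    qed
  qed
  show "z' \<in> DomSet L y (Suc k)" unfolding DomSet_def using A B by blast
qed

lemma DomSet_inj: "inj_on (\<lambda>(z,u). z(Suc k := u)) (SIGMA z:DomSet L y k. S z)"
proof (rule inj_onI, clarsimp)
  fix z u z' u'
  assume z: "z \<in> DomSet L y k" and z': "z' \<in> DomSet L y k" and eq: "z(Suc k := u) = z'(Suc k := u')"
  have "u = u'" using fun_cong[OF eq, of "Suc k"] by simp
  moreover have "z = z'"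
  proof
    fix n show "z n = z' n"
    proof (cases "n = Suc k")
      case True then show ?thesis using z z' by (simp add: DomSet_def)
    next
      case False then show ?thesis using fun_cong[OF eq, of n] by simp
    qed
  qed
  ultimately show "z = z' \<and> u = u'" by simp
qed

lemma DomSet_finite: "finite (DomSet L y k)"
proof (induction k)
  case 0 then show ?case by (simp add: DomSet_0)
next
  case (Suc k) then show ?case by (simp add: DomSet_Suc)
qed

lemma DomSet_sum:
  "(\<Sum>z\<in>DomSet L y (Suc k). Fn z) = (\<Sum>z\<in>DomSet L y k. \<Sum>u\<in>{lob L z (Suc k)..y (Suc k)}. Fn (z(Suc k := u)))"
proof -
  have "(\<Sum>z\<in>DomSet L y (Suc k). Fn z) = (\<Sum>p\<in>(SIGMA z:DomSet L y k. {lob L z (Suc k)..y (Suc k)}). Fn ((\<lambda>(z,u). z(Suc k := u)) p))"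
    unfolding DomSet_Suc by (rule sum.reindex[OF DomSet_inj, unfolded comp_def])
  also have "\<dots> = (\<Sum>z\<in>DomSet L y k. \<Sum>u\<in>{lob L z (Suc k)..y (Suc k)}. Fn (z(Suc k := u)))"
    by (subst sum.Sigma) (auto simp: DomSet_finite split_def intro!: sum.cong)
  finally show ?thesis .
qed

lemma DomSet_ge:
  assumes "z \<in> DomSet L y k" "n \<in> {1..k}"
  shows "L \<le> z n"
  using assms(2)
proof (induction n)
  case 0 then show ?case by simp
next
  case (Suc n)
  then have "lob L z (Suc n) \<le> z (Suc n)" using assms(1) by (auto simp: DomSet_def)
  then show ?case using Suc by (cases n) (auto simp: lob_def)
qed

definition om :: "real \<Rightarrow> (nat \<Rightarrow> int) \<Rightarrow> nat \<Rightarrow> int \<Rightarrow> real" where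
  "om q y n u = q ^ nat (y n - (if n = 1 then u else max u (y (n - 1))))"

definition Rrow :: "real \<Rightarrow> int \<Rightarrow> (nat \<Rightarrow> int) \<Rightarrow> (nat \<Rightarrow> int \<Rightarrow> nat \<Rightarrow> real) \<Rightarrow> nat \<Rightarrow> nat \<Rightarrow> real" where
  "Rrow q L y c a b = (\<Sum>u\<in>{L..y (Suc a)}. q ^ nat (y (Suc a) - u) * c a u b)"

lemma detr_scale:
  assumes "k < n"
  shows "detr n (\<rho>(k := (\<lambda>b. s * v b))) = s * detr n (\<rho>(k := v))"
  using detr_lin[OF assms, of \<rho> s v 0 v] by simp

lemma key:
  fixes c :: "nat \<Rightarrow> int \<Rightarrow> nat \<Rightarrow> real" and q :: real
  assumes c0: "\<And>a u b. a < N \<Longrightarrow> b < N \<Longrightarrow> u \<le> L \<Longrightarrow> c a u b = 0"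
    and cs: "\<And>a u b. Suc a < N \<Longrightarrow> b < N \<Longrightarrow> c (Suc a) u b = c a (u+1) b - c a u b"
    and ym: "\<And>n. 1 \<le> n \<Longrightarrow> n < N \<Longrightarrow> y n \<le> y (Suc n)"
    and k: "k \<le> N"
  shows "(\<Sum>z\<in>DomSet L y k. (\<Prod>n\<in>{1..k}. om q y n (z n)) * detr N (\<lambda>a. if a < k then c a (z (Suc a)) else \<rho> a))
         = detr N (\<lambda>a. if a < k then Rrow q L y c a else \<rho> a)"
  using k
proof (induction k arbitrary: \<rho>)
  case 0
  then show ?case by (simp add: DomSet_0)
next
  case (Suc k)
  let ?M = "\<lambda>z. (\<lambda>a. if a < k then c a (z (Suc a)) else \<rho> a)"
  let ?W = "\<lambda>z. (\<Prod>n\<in>{1..k}. om q y n (z n))"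
  let ?V = "\<lambda>z b. \<Sum>u\<in>{lob L z (Suc k)..y (Suc k)}. om q y (Suc k) u * c k u b"
  have kN: "k < N" using Suc.prems by simp
  have inner: "(\<Sum>u\<in>{lob L z (Suc k)..y (Suc k)}.
        (\<Prod>n\<in>{1..Suc k}. om q y n ((z(Suc k := u)) n)) *
        detr N (\<lambda>a. if a < Suc k then c a ((z(Suc k := u)) (Suc a)) else \<rho> a))
      = ?W z * detr N ((?M z)(k := ?V z))" for z
  proof -
    have p: "(\<Prod>n\<in>{1..Suc k}. om q y n ((z(Suc k := u)) n)) = ?W z * om q y (Suc k) u" for u
    proof -
      have "(\<Prod>n\<in>{1..Suc k}. om q y n ((z(Suc k := u)) n)) = om q y (Suc k) u * (\<Prod>n\<in>{1..k}. om q y n ((z(Suc k := u)) n))"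
        by (simp add: atLeastAtMostSuc_conv)
      also have "(\<Prod>n\<in>{1..k}. om q y n ((z(Suc k := u)) n)) = ?W z" by (rule prod.cong) auto
      finally show ?thesis by simp
    qed
    have m: "(\<lambda>a. if a < Suc k then c a ((z(Suc k := u)) (Suc a)) else \<rho> a) = (?M z)(k := c k u)" for u
      by (rule ext) auto
    have "(\<Sum>u\<in>{lob L z (Suc k)..y (Suc k)}.
        (\<Prod>n\<in>{1..Suc k}. om q y n ((z(Suc k := u)) n)) *
        detr N (\<lambda>a. if a < Suc k then c a ((z(Suc k := u)) (Suc a)) else \<rho> a))
      = (\<Sum>u\<in>{lob L z (Suc k)..y (Suc k)}. ?W z * detr N ((?M z)(k := (\<lambda>b. om q y (Suc k) u * c k u b))))"
      unfolding p m by (rule sum.cong[OF refl]) (simp add: detr_scale[OF kN])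
    also have "\<dots> = ?W z * detr N ((?M z)(k := ?V z))"
      by (simp add: detr_sum[OF kN] sum_distrib_left)
    finally show ?thesis .
  qed
  have "(\<Sum>z\<in>DomSet L y (Suc k). (\<Prod>n\<in>{1..Suc k}. om q y n (z n)) * detr N (\<lambda>a. if a < Suc k then c a (z (Suc a)) else \<rho> a))
      = (\<Sum>z\<in>DomSet L y k. ?W z * detr N ((?M z)(k := ?V z)))"
    unfolding DomSet_sum inner ..
  also have "\<dots> = detr N (\<lambda>a. if a < Suc k then Rrow q L y c a else \<rho> a)"
  proof (cases "k = 0")
    case True
    have "?V z = Rrow q L y c 0" for z unfolding True
      by (rule ext) (simp add: lob_def om_def Rrow_def)
    then show ?thesis using True
      by (simp add: DomSet_0) (rule arg_cong[of _ _ "detr N"], rule ext, simp)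
  next
    case False
    then obtain k' where k': "k = Suc k'" by (cases k) auto
    let ?R = "Rrow q L y c"
    define \<alpha> where "\<alpha> = (1-q) * q ^ nat (y (Suc k) - y k)"
    define \<beta> where "\<beta> = q ^ nat (y (Suc k) - y k)"
    let ?R' = "\<lambda>b. ?R k b + \<alpha> * ?R k' b"
    have step: "?W z * detr N ((?M z)(k := ?V z)) = ?W z * detr N (\<lambda>a. if a < k then c a (z (Suc a)) else (\<rho>(k := ?R')) a)"
      if z: "z \<in> DomSet L y k" for z
    proof -
      have zk: "L \<le> z k" "z k \<le> y k" using DomSet_ge[OF z, of k] z False by (auto simp: DomSet_def)
      have yk: "y k \<le> y (Suc k)" using ym[of k] False kN by simp
      have lobk: "lob L z (Suc k) = z k" using False by (simp add: lob_def)
      have V: "?V z b = 1 * ?R' b + (- \<beta>) * c k' (z k) b" if b: "b < N" for b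
      proof -
        let ?C = "\<lambda>u. c k' u b"
        have ck: "c k u b = ?C (u+1) - ?C u" for u using cs[where a=k' and u=u and b=b] k' kN b by simp
        have omk: "om q y (Suc k) u = q ^ nat (y (Suc k) - max u (y k))" for u using False by (simp add: om_def)
        have "?V z b = (\<Sum>u\<in>{z k..y (Suc k)}. q ^ nat (y (Suc k) - max u (y k)) * (?C (u+1) - ?C u))"
          unfolding lobk omk ck ..
        also have "\<dots> = (\<Sum>u\<in>{L..y (Suc k)}. q ^ nat (y (Suc k) - u) * (?C (u+1) - ?C u))
            + (1-q) * q ^ nat (y (Suc k) - y k) * (\<Sum>u\<in>{L..y k}. q ^ nat (y k - u) * ?C u)
            - q ^ nat (y (Suc k) - y k) * ?C (z k)"
          by (rule row_identity) (use zk yk c0[where a=k' and u=L and b=b] k' kN b in auto)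
        also have "(\<Sum>u\<in>{L..y (Suc k)}. q ^ nat (y (Suc k) - u) * (?C (u+1) - ?C u)) = ?R k b"
          unfolding Rrow_def ck ..
        also have "(\<Sum>u\<in>{L..y k}. q ^ nat (y k - u) * ?C u) = ?R k' b"
          unfolding Rrow_def k' ..
        finally show ?thesis unfolding \<alpha>_def \<beta>_def by simp
      qed
      have e0: "detr N ((?M z)(k := ?V z)) = detr N ((?M z)(k := (\<lambda>b. 1 * ?R' b + (- \<beta>) * c k' (z k) b)))"
        by (rule detr_cong) (auto simp: V)
      have e1: "detr N ((?M z)(k := (\<lambda>b. 1 * ?R' b + (- \<beta>) * c k' (z k) b))) = 1 * detr N ((?M z)(k := ?R')) + (- \<beta>) * detr N ((?M z)(k := c k' (z k)))"
        by (rule detr_lin[OF kN])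
      have e2: "detr N ((?M z)(k := c k' (z k))) = 0"
        by (rule detr_identical[of k N k']) (use kN k' in auto)
      have e3: "(?M z)(k := ?R') = (\<lambda>a. if a < k then c a (z (Suc a)) else (\<rho>(k := ?R')) a)"
        by (rule ext) auto
      show ?thesis unfolding e0 e1 e2 e3 by simp
    qed
    have "(\<Sum>z\<in>DomSet L y k. ?W z * detr N ((?M z)(k := ?V z)))
        = (\<Sum>z\<in>DomSet L y k. ?W z * detr N (\<lambda>a. if a < k then c a (z (Suc a)) else (\<rho>(k := ?R')) a))"
      by (rule sum.cong[OF refl]) (rule step)
    also have "\<dots> = detr N (\<lambda>a. if a < k then ?R a else (\<rho>(k := ?R')) a)"
      by (rule Suc.IH) (use Suc.prems in simp)
    also have "(\<lambda>a. if a < k then ?R a else (\<rho>(k := ?R')) a)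
        = (\<lambda>a. if a < Suc k then ?R a else \<rho> a)(k := (\<lambda>b. (\<lambda>a. if a < Suc k then ?R a else \<rho> a) k b + \<alpha> * (\<lambda>a. if a < Suc k then ?R a else \<rho> a) k' b))"
      by (rule ext) (auto simp: k')
    also have "detr N \<dots> = detr N (\<lambda>a. if a < Suc k then ?R a else \<rho> a)"
      by (rule detr_rowadd) (use kN k' in auto)
    finally show ?thesis .
  qed
  finally show ?case .
qed

fun rowmap :: "(nat \<Rightarrow> int) \<Rightarrow> (nat \<Rightarrow> nat) \<Rightarrow> nat \<Rightarrow> int" where
  "rowmap z r 0 = 0"
| "rowmap z r (Suc n) = (if n = 0 then z 1 else max (z (Suc n)) (rowmap z r n)) + int (r (Suc n))"

lemma LPP_row: "LPP \<omega> x (Suc m) n = rowmap (LPP \<omega> x m) (\<lambda>j. \<omega> (Suc m, j)) n"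
  by (induction n) auto

lemma rowmap_local:
  "(\<And>j. 1 \<le> j \<Longrightarrow> j \<le> n \<Longrightarrow> z j = z' j \<and> r j = r' j) \<Longrightarrow> rowmap z r n = rowmap z' r' n"
proof (induction n)
  case 0 then show ?case by simp
next
  case (Suc n)
  have "rowmap z r n = rowmap z' r' n" using Suc.IH Suc.prems by simp
  then show ?case using Suc.prems[of "Suc n"] Suc.prems[of 1] by simp
qed

lemma rowmap_ge: "1 \<le> n \<Longrightarrow> z n \<le> rowmap z r n"
  by (cases n) auto

lemma LPP_local:
  "(\<And>i j. 1 \<le> i \<Longrightarrow> i \<le> m \<Longrightarrow> 1 \<le> j \<Longrightarrow> j \<le> n \<Longrightarrow> \<omega> (i,j) = \<omega>' (i,j))
   \<Longrightarrow> LPP \<omega> x m n = LPP \<omega>' x m n"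
proof (induction m arbitrary: n)
  case 0 then show ?case by simp
next
  case (Suc m)
  have "rowmap (LPP \<omega> x m) (\<lambda>j. \<omega> (Suc m, j)) n = rowmap (LPP \<omega>' x m) (\<lambda>j. \<omega>' (Suc m, j)) n"
  proof (rule rowmap_local)
    fix j assume j: "1 \<le> j" "j \<le> n"
    have "LPP \<omega> x m j = LPP \<omega>' x m j" using Suc.IH[of j] Suc.prems j by simp
    moreover have "\<omega> (Suc m, j) = \<omega>' (Suc m, j)" using Suc.prems j by simp
    ultimately show "LPP \<omega> x m j = LPP \<omega>' x m j \<and> \<omega> (Suc m, j) = \<omega>' (Suc m, j)" by simp
  qed
  then show ?case by (simp only: LPP_row)
qed

lemma LPP_ge: "1 \<le> n \<Longrightarrow> x n \<le> LPP \<omega> x m n"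
proof (induction m arbitrary: n)
  case 0 then show ?case by simp
next
  case (Suc m)
  then obtain n' where n': "n = Suc n'" by (cases n) auto
  show ?case
  proof (cases "n' = 0")
    case True then show ?thesis using Suc.IH[of 1] n' by simp
  next
    case False then show ?thesis using Suc.IH[of n] n' by (simp add: max_def)
  qed
qed

lemma LPP_mono1: "1 \<le> n \<Longrightarrow> LPP \<omega> x (Suc m) n \<le> LPP \<omega> x (Suc m) (Suc n)"
  by simp

lemma LPP_weyl:
  assumes "0 < m \<or> weyl N x"
  shows "weyl N (LPP \<omega> x m)"
proof (cases m)
  case 0
  then have "LPP \<omega> x m = x" by (simp add: fun_eq_iff)
  then show ?thesis using assms 0 by simp
next
  case (Suc m')
  show ?thesis unfolding weyl_def
  proof (intro allI impI)
    fix i j assume ij: "1 \<le> i" "i \<le> j" "j \<le> N"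
    show "LPP \<omega> x m i \<le> LPP \<omega> x m j"
      using ij(2)
    proof (induction j rule: dec_induct)
      case base then show ?case by simp
    next
      case (step j)
      then show ?case using LPP_mono1[of j \<omega> x m'] ij(1) Suc by simp
    qed
  qed
qed

definition bnd :: "(nat \<Rightarrow> int) \<Rightarrow> (nat \<Rightarrow> int) \<Rightarrow> nat \<Rightarrow> int" where
  "bnd z y n = (if n = 1 then z 1 else max (z n) (y (n - 1)))"

definition Qk :: "real \<Rightarrow> nat \<Rightarrow> (nat \<Rightarrow> int) \<Rightarrow> (nat \<Rightarrow> int) \<Rightarrow> real" where
  "Qk q N z y = (\<Prod>n\<in>{1..N}. if bnd z y n \<le> y n then (1-q) * q ^ nat (y n - bnd z y n) else 0)"

lemma rowmap_iff:
  "(\<forall>n\<in>{1..N}. rowmap z r n = y n) \<longleftrightarrow> (\<forall>n\<in>{1..N}. int (r n) = y n - bnd z y n)"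
proof
  assume h: "\<forall>n\<in>{1..N}. rowmap z r n = y n"
  show "\<forall>n\<in>{1..N}. int (r n) = y n - bnd z y n"
  proof
    fix n assume n: "n \<in> {1..N}"
    then obtain n' where n': "n = Suc n'" by (cases n) auto
    show "int (r n) = y n - bnd z y n"
    proof (cases "n' = 0")
      case True
      have "rowmap z r n = y n" using h n by blast
      then show ?thesis using True n' by (simp add: bnd_def)
    next
      case False
      then have a: "rowmap z r n' = y n'" using h n n' by auto
      have b: "rowmap z r n = y n" using h n by blast
      show ?thesis using a b n' False by (simp add: bnd_def)
    qed
  qed
next
  assume h: "\<forall>n\<in>{1..N}. int (r n) = y n - bnd z y n"
  have "n \<in> {1..N} \<longrightarrow> rowmap z r n = y n" for n
  proof (induction n)
    case 0 then show ?case by simp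
  next
    case (Suc n)
    show ?case
    proof
      assume sn: "Suc n \<in> {1..N}"
      show "rowmap z r (Suc n) = y (Suc n)"
      proof (cases "n = 0")
        case True then show ?thesis using h sn by (simp add: bnd_def)
      next
        case False
        then have "rowmap z r n = y n" using Suc sn by auto
        then show ?thesis using h sn False by (simp add: bnd_def)
      qed
    qed
  qed
  then show "\<forall>n\<in>{1..N}. rowmap z r n = y n" by blast
qed

lemma prob_row:
  assumes q: "0 < q" "q < 1"
  shows "measure_pmf.prob (Pi_pmf ({Suc m} \<times> {1..N}) 0 (\<lambda>_. geometric_pmf (1-q)))
           {g. \<forall>n\<in>{1..N}. rowmap z (\<lambda>j. g (Suc m, j)) n = y n} = Qk q N z y"
proof -
  let ?S = "\<lambda>p::nat\<times>nat. {v::nat. int v = y (snd p) - bnd z y (snd p)}"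
  have ev: "{g. \<forall>n\<in>{1..N}. rowmap z (\<lambda>j. g (Suc m, j)) n = y n} = Pi ({Suc m} \<times> {1..N}) ?S"
    unfolding rowmap_iff by (auto simp: Pi_def)
  have pr: "measure_pmf.prob (geometric_pmf (1-q)) (?S p)
      = (if bnd z y (snd p) \<le> y (snd p) then (1-q) * q ^ nat (y (snd p) - bnd z y (snd p)) else 0)" for p
  proof (cases "bnd z y (snd p) \<le> y (snd p)")
    case True
    then have "?S p = {nat (y (snd p) - bnd z y (snd p))}" by auto
    then show ?thesis using True q by (simp add: measure_pmf_single pmf_geometric)
  next
    case False
    then have "?S p = {}" by auto
    then show ?thesis using False by simp
  qed
  have "measure_pmf.prob (Pi_pmf ({Suc m} \<times> {1..N}) 0 (\<lambda>_. geometric_pmf (1-q))) (Pi ({Suc m} \<times> {1..N}) ?S)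
      = (\<Prod>p\<in>{Suc m} \<times> {1..N}. measure_pmf.prob (geometric_pmf (1-q)) (?S p))"
    by (rule measure_Pi_pmf_Pi) simp
  also have "\<dots> = (\<Prod>p\<in>{Suc m} \<times> {1..N}. (if bnd z y (snd p) \<le> y (snd p) then (1-q) * q ^ nat (y (snd p) - bnd z y (snd p)) else 0))"
    using pr by simp
  also have "\<dots> = Qk q N z y"
  proof -
    have e1: "{Suc m} \<times> {1..N} = (\<lambda>n. (Suc m, n)) ` {1..N}" by auto
    have gen: "(\<Prod>p\<in>(\<lambda>n. (Suc m, n)) ` {1..N}. h (snd p)) = (\<Prod>n\<in>{1..N}. h n)" for h :: "nat \<Rightarrow> real"
      by (subst prod.reindex) (auto intro: inj_onI)
    show ?thesis unfolding Qk_def e1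
      by (rule gen[of "\<lambda>n. if bnd z y n \<le> y n then (1-q) * q ^ nat (y n - bnd z y n) else 0"])
  qed
  finally show ?thesis unfolding ev .
qed

lemma prob_pair_times:
  "measure_pmf.prob (pair_pmf M1 M2) (S \<times> T) = measure_pmf.prob M1 S * measure_pmf.prob M2 T"
proof -
  have "measure_pmf.prob (pair_pmf M1 M2) (S \<times> T) = measure_pmf.prob (pair_pmf M1 M2) ((S \<times> T) \<inter> set_pmf (pair_pmf M1 M2))"
    by (rule measure_Int_set_pmf[symmetric])
  also have "(S \<times> T) \<inter> set_pmf (pair_pmf M1 M2) = (S \<inter> set_pmf M1) \<times> (T \<inter> set_pmf M2)" by auto
  also have "measure_pmf.prob (pair_pmf M1 M2) \<dots> = measure_pmf.prob M1 (S \<inter> set_pmf M1) * measure_pmf.prob M2 (T \<inter> set_pmf M2)"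
    by (rule measure_pmf_prob_product) (auto intro: countable_Int2)
  also have "\<dots> = measure_pmf.prob M1 S * measure_pmf.prob M2 T" by (simp add: measure_Int_set_pmf)
  finally show ?thesis .
qed

definition Pm :: "real \<Rightarrow> nat \<Rightarrow> nat \<Rightarrow> (nat \<Rightarrow> int) \<Rightarrow> (nat \<Rightarrow> int) \<Rightarrow> real" where
  "Pm q m N x z = measure_pmf.prob (weights q m N) {\<omega>. \<forall>n\<in>{1..N}. LPP \<omega> x m n = z n}"

definition Zs :: "nat \<Rightarrow> (nat \<Rightarrow> int) \<Rightarrow> (nat \<Rightarrow> int) \<Rightarrow> (nat \<Rightarrow> int) set" where
  "Zs N x y = PiE_dflt {1..N} 0 (\<lambda>n. {x n..y n})"

lemma markov:
  assumes q: "0 < q" "q < 1"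
  shows "Pm q (Suc m) N x y = (\<Sum>z\<in>Zs N x y. Pm q m N x z * Qk q N z y)"
proof -
  define A where "A = {1..m} \<times> {1..N}"
  define B where "B = {Suc m} \<times> {1..N}"
  define p where "p = (\<lambda>_::nat\<times>nat. geometric_pmf (1-q))"
  define hh where "hh = (\<lambda>(f,g) (x::nat\<times>nat). if x \<in> A then f x else (g x :: nat))"
  define E where "E = {\<omega>. \<forall>n\<in>{1..N}. LPP \<omega> x (Suc m) n = y n}"
  define Ez where "Ez z = {f. \<forall>n\<in>{1..N}. LPP f x m n = z n}" for z
  define Fz where "Fz z = {g. \<forall>n\<in>{1..N}. rowmap z (\<lambda>j. g (Suc m, j)) n = y n}" for z
  have w: "weights q (Suc m) N = map_pmf hh (pair_pmf (Pi_pmf A 0 p) (Pi_pmf B 0 p))"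
  proof -
    have "{1..Suc m} \<times> {1..N} = A \<union> B" unfolding A_def B_def by auto
    then have "weights q (Suc m) N = Pi_pmf (A \<union> B) 0 p" unfolding weights_def p_def by simp
    also have "\<dots> = map_pmf hh (pair_pmf (Pi_pmf A 0 p) (Pi_pmf B 0 p))"
      unfolding hh_def by (rule Pi_pmf_union) (auto simp: A_def B_def)
    finally show ?thesis .
  qed
  have loc1: "LPP (hh (f,g)) x m n = LPP f x m n" if "n \<le> N" for f g n
    by (rule LPP_local) (use that in \<open>auto simp: hh_def A_def\<close>)
  define zf where "zf f = (\<lambda>n. if n \<in> {1..N} then LPP f x m n else 0)" for f
  have loc2: "LPP (hh (f,g)) x (Suc m) n = rowmap (zf f) (\<lambda>j. g (Suc m, j)) n" if "n \<le> N" for f g n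
    unfolding LPP_row
    by (rule rowmap_local) (use that loc1 in \<open>auto simp: zf_def hh_def A_def\<close>)
  have zfZ: "zf f \<in> Zs N x y" if "g \<in> Fz (zf f)" for f g
  proof -
    have "x n \<le> zf f n \<and> zf f n \<le> y n" if n: "n \<in> {1..N}" for n
    proof
      show "x n \<le> zf f n" using n LPP_ge[of n x f m] by (simp add: zf_def)
      have "zf f n \<le> rowmap (zf f) (\<lambda>j. g (Suc m, j)) n" using n by (intro rowmap_ge) simp
      also have "\<dots> = y n" using \<open>g \<in> Fz (zf f)\<close> n by (simp add: Fz_def)
      finally show "zf f n \<le> y n" .
    qed
    then show ?thesis by (auto simp: Zs_def PiE_dflt_def zf_def)
  qed
  have pre: "hh -` E = (\<Union>z\<in>Zs N x y. Ez z \<times> Fz z)"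
  proof (intro equalityI subsetI)
    fix fg assume fg: "fg \<in> hh -` E"
    obtain f g where fg': "fg = (f,g)" by (cases fg)
    have g: "g \<in> Fz (zf f)" using fg unfolding fg' E_def Fz_def by (auto simp: loc2)
    have f: "f \<in> Ez (zf f)" by (simp add: Ez_def zf_def)
    show "fg \<in> (\<Union>z\<in>Zs N x y. Ez z \<times> Fz z)" using zfZ[OF g] f g fg' by blast
  next
    fix fg assume "fg \<in> (\<Union>z\<in>Zs N x y. Ez z \<times> Fz z)"
    then obtain z f g where z: "z \<in> Zs N x y" and f: "f \<in> Ez z" and g: "g \<in> Fz z" and fg': "fg = (f,g)" by auto
    have "rowmap (zf f) (\<lambda>j. g (Suc m, j)) n = rowmap z (\<lambda>j. g (Suc m, j)) n" if "n \<le> N" for n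
      by (rule rowmap_local) (use that f in \<open>auto simp: zf_def Ez_def\<close>)
    then show "fg \<in> hh -` E" using g unfolding fg' E_def Fz_def by (auto simp: loc2)
  qed
  have disj: "disjoint_family_on (\<lambda>z. Ez z \<times> Fz z) (Zs N x y)"
    unfolding disjoint_family_on_def
  proof (intro ballI impI)
    fix z z' assume z: "z \<in> Zs N x y" and z': "z' \<in> Zs N x y" and ne: "z \<noteq> z'"
    then obtain n where n: "z n \<noteq> z' n" by auto
    have "n \<in> {1..N}"
    proof (rule ccontr)
      assume "n \<notin> {1..N}"
      then have "z n = 0" "z' n = 0" using z z' by (auto simp: Zs_def PiE_dflt_def)
      with n show False by simp
    qed
    then have "Ez z \<inter> Ez z' = {}" using n by (auto simp: Ez_def)
    then show "(Ez z \<times> Fz z) \<inter> (Ez z' \<times> Fz z') = {}" by auto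
  qed
  have fin: "finite (Zs N x y)" unfolding Zs_def by (rule finite_PiE_dflt) auto
  have "Pm q (Suc m) N x y = measure_pmf.prob (pair_pmf (Pi_pmf A 0 p) (Pi_pmf B 0 p)) (hh -` E)"
    unfolding Pm_def E_def[symmetric] w by simp
  also have "\<dots> = (\<Sum>z\<in>Zs N x y. measure_pmf.prob (pair_pmf (Pi_pmf A 0 p) (Pi_pmf B 0 p)) (Ez z \<times> Fz z))"
    unfolding pre by (rule measure_pmf.finite_measure_finite_Union[OF fin _ disj]) simp
  also have "\<dots> = (\<Sum>z\<in>Zs N x y. Pm q m N x z * Qk q N z y)"
  proof (rule sum.cong[OF refl])
    fix z
    have "measure_pmf.prob (Pi_pmf A 0 p) (Ez z) = Pm q m N x z"
      unfolding Pm_def weights_def A_def p_def Ez_def ..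
    moreover have "measure_pmf.prob (Pi_pmf B 0 p) (Fz z) = Qk q N z y"
      unfolding B_def p_def Fz_def by (rule prob_row[OF q])
    ultimately show "measure_pmf.prob (pair_pmf (Pi_pmf A 0 p) (Pi_pmf B 0 p)) (Ez z \<times> Fz z) = Pm q m N x z * Qk q N z y"
      by (simp add: prob_pair_times)
  qed
  finally show ?thesis .
qed

lemma Pm_0: "Pm q 0 N x z = (if \<forall>n\<in>{1..N}. z n = x n then 1 else 0)"
proof -
  have "weights q 0 N = return_pmf (\<lambda>_. 0)" unfolding weights_def by simp
  then show ?thesis unfolding Pm_def by (auto simp: indicator_def)
qed

lemma Pm_zero_not_weyl:
  assumes "weyl N x" "\<not> weyl N z"
  shows "Pm q m N x z = 0"
proof -
  have e: "{\<omega>. \<forall>n\<in>{1..N}. LPP \<omega> x m n = z n} = {}"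
  proof (intro equalityI subsetI)
    fix \<omega> assume h: "\<omega> \<in> {\<omega>. \<forall>n\<in>{1..N}. LPP \<omega> x m n = z n}"
    have "weyl N (LPP \<omega> x m)" using assms(1) by (intro LPP_weyl) simp
    then have "weyl N z" using h unfolding weyl_def by auto
    then show "\<omega> \<in> {}" using assms(2) by simp
  qed simp
  show ?thesis unfolding Pm_def e by simp
qed

lemma Pm_zero_below:
  assumes "n \<in> {1..N}" "z n < x n"
  shows "Pm q m N x z = 0"
proof -
  have e: "{\<omega>. \<forall>n\<in>{1..N}. LPP \<omega> x m n = z n} = {}"
  proof (intro equalityI subsetI)
    fix \<omega> assume "\<omega> \<in> {\<omega>. \<forall>n\<in>{1..N}. LPP \<omega> x m n = z n}"
    then have "LPP \<omega> x m n = z n" using assms(1) by auto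
    moreover have "x n \<le> LPP \<omega> x m n" using assms(1) by (intro LPP_ge) auto
    ultimately show "\<omega> \<in> {}" using assms(2) by simp
  qed simp
  show ?thesis unfolding Pm_def e by simp
qed

definition wm :: "real \<Rightarrow> nat \<Rightarrow> int \<Rightarrow> real" where
  "wm q m = (if m = 0 then delta else w q m)"

definition Dm :: "real \<Rightarrow> nat \<Rightarrow> nat \<Rightarrow> (nat \<Rightarrow> int) \<Rightarrow> (nat \<Rightarrow> int) \<Rightarrow> real" where
  "Dm q m N x y = detr N (\<lambda>a b. Hf (wm q m) (int a - int b) (y (Suc a) - x (Suc b)))"

lemma wm_lsupp: "lsupp (wm q m) 0"
  by (auto simp: wm_def lsupp_def w_def delta_def)

lemma w_Suc_rec:
  fixes q :: real
  assumes m: "m \<ge> 1"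
  shows "w q (Suc m) t = q * w q (Suc m) (t-1) + (1-q) * w q m t"
proof (cases "t < 0")
  case True then show ?thesis by (simp add: w_def)
next
  case False
  then obtain n where t: "t = int n" by (metis nonneg_int_cases not_less)
  obtain m' where m': "m = Suc m'" using m by (cases m) auto
  show ?thesis
  proof (cases n)
    case 0 then show ?thesis using t m' by (simp add: w_def)
  next
    case (Suc n')
    have tn: "nat t = Suc n'" "nat (t - 1) = n'" "t - 1 \<ge> 0" using t Suc by auto
    have pas: "real (Suc (Suc (n' + m')) choose Suc m') = real (Suc (n' + m') choose Suc m') + real (Suc (n' + m') choose m')"
      by (simp add: binomial_Suc_Suc)
    have a1: "w q (Suc m) t = real (Suc (Suc (n' + m')) choose Suc m') * (q * q ^ n') * ((1-q) * (1-q) ^ m)"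
      unfolding w_def using tn False m' by simp
    have a2: "w q (Suc m) (t - 1) = real (Suc (n' + m') choose Suc m') * q ^ n' * ((1-q) * (1-q) ^ m)"
      unfolding w_def using tn m' by simp
    have a3: "w q m t = real (Suc (n' + m') choose m') * (q * q ^ n') * (1-q) ^ m"
      unfolding w_def using tn False m' by simp
    show ?thesis unfolding a1 a2 a3 pas by (simp add: algebra_simps)
  qed
qed

lemma wm_rec: "wm q (Suc m) t = q * wm q (Suc m) (t-1) + (1-q) * wm q m t"
proof (cases "m = 0")
  case True
  then show ?thesis
    by (cases "t < 0"; cases "t = 0") (auto simp: wm_def w_def delta_def nat_diff_distrib' power_Suc[symmetric]
        intro!: arg_cong[of _ _ "\<lambda>n. q ^ n"] simp del: power_Suc)
next
  case False
  then show ?thesis using w_Suc_rec[of m q t] by (simp add: wm_def)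
qed

lemma Hf_wm_zero:
  assumes "t < - \<bar>k\<bar>"
  shows "Hf (wm q m) k t = 0"
  using Hf_lsupp[OF wm_lsupp, of q m k] assms by (simp add: lsupp_def)

lemma Dm_0:
  assumes "weyl N x" "weyl N y"
  shows "Dm q 0 N x y = Pm q 0 N x y"
  unfolding Dm_def wm_def Pm_0 using det_delta[OF assms] by simp

lemma DomSet_weyl:
  assumes "z \<in> DomSet L y N"
  shows "weyl N z"
  unfolding weyl_def
proof (intro allI impI)
  fix i j assume ij: "1 \<le> i" "i \<le> j" "j \<le> N"
  show "z i \<le> z j" using ij(2)
  proof (induction j rule: dec_induct)
    case base then show ?case by simp
  next
    case (step j)
    then have "lob L z (Suc j) \<le> z (Suc j)" using assms ij by (auto simp: DomSet_def)
    moreover have "lob L z (Suc j) = z j" using step ij by (simp add: lob_def)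
    ultimately show ?case using step by simp
  qed
qed

theorem main:
  assumes q: "0 < q" "q < 1" and x: "weyl N x"
  shows "weyl N y \<Longrightarrow> Pm q m N x y = Dm q m N x y"
proof (induction m arbitrary: y)
  case 0 then show ?case using Dm_0[OF x] by simp
next
  case (Suc m)
  note y = Suc.prems
  define L where "L = x 1 - int N - 1"
  have xL: "L < x n - int N" if n: "n \<in> {1..N}" for n
  proof -
    from x have "\<forall>i j. 1 \<le> i \<longrightarrow> i \<le> j \<longrightarrow> j \<le> N \<longrightarrow> x i \<le> x j" by (simp add: weyl_def)
    then have "x 1 \<le> x n" using n by auto
    then show ?thesis unfolding L_def by simp
  qed
  define c where "c = (\<lambda>a u b. Hf (wm q m) (int a - int b) (u - x (Suc b)))"
  define Fn where "Fn z = Pm q m N x z * Qk q N z y" for z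
  define BB where "BB = PiE_dflt {1..N} 0 (\<lambda>n. {L..y n})"
  have finBB: "finite BB" unfolding BB_def by (rule finite_PiE_dflt) auto
  have s1: "(\<Sum>z\<in>Zs N x y. Fn z) = (\<Sum>z\<in>BB. Fn z)"
  proof (rule sum.mono_neutral_left[OF finBB])
    show "Zs N x y \<subseteq> BB" unfolding Zs_def BB_def PiE_dflt_def using xL by force
    show "\<forall>z\<in>BB - Zs N x y. Fn z = 0"
    proof
      fix z assume z: "z \<in> BB - Zs N x y"
      then obtain n where n: "n \<in> {1..N}" "z n < x n" unfolding BB_def Zs_def PiE_dflt_def by force
      show "Fn z = 0" unfolding Fn_def using Pm_zero_below[where n=n and N=N and z=z and x=x, OF n] by simp
    qed
  qed
  have s2: "(\<Sum>z\<in>DomSet L y N. Fn z) = (\<Sum>z\<in>BB. Fn z)"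
  proof (rule sum.mono_neutral_left[OF finBB])
    show "DomSet L y N \<subseteq> BB"
    proof
      fix z assume z: "z \<in> DomSet L y N"
      have "n \<in> {1..N} \<Longrightarrow> L \<le> z n" for n using DomSet_ge[OF z] by simp
      moreover have "z n = 0" if "n \<notin> {1..N}" for n
        using z that by (cases "n = 0") (auto simp: DomSet_def)
      moreover have "n \<in> {1..N} \<Longrightarrow> z n \<le> y n" for n using z by (auto simp: DomSet_def)
      ultimately show "z \<in> BB" unfolding BB_def PiE_dflt_def by auto
    qed
    show "\<forall>z\<in>BB - DomSet L y N. Fn z = 0"
    proof
      fix z assume z: "z \<in> BB - DomSet L y N"
      have zBB: "\<forall>k. (k \<in> {1..N} \<longrightarrow> z k \<in> {L..y k}) \<and> (k \<notin> {1..N} \<longrightarrow> z k = 0)"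
        using z by (simp add: BB_def PiE_dflt_def)
      have "\<not> weyl N z"
      proof
        assume wz: "weyl N z"
        have wz': "\<forall>i j. 1 \<le> i \<longrightarrow> i \<le> j \<longrightarrow> j \<le> N \<longrightarrow> z i \<le> z j" using wz by (simp add: weyl_def)
        have "z \<in> DomSet L y N" unfolding DomSet_def
        proof (intro CollectI conjI allI impI ballI)
          fix n assume "n = 0 \<or> N < n"
          then have "n \<notin> {1..N}" by auto
          then show "z n = 0" using zBB by blast
        next
          fix n assume n: "n \<in> {1..N}"
          then have zn: "z n \<in> {L..y n}" using zBB by blast
          show "lob L z n \<le> z n"
          proof (cases "n = 1")
            case True then show ?thesis using zn by (simp add: lob_def)
          next
            case False
            then have "z (n - 1) \<le> z n" using wz' n by auto
            then show ?thesis using False by (simp add: lob_def)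
          qed
          show "z n \<le> y n" using zn by simp
        qed
        then show False using z by simp
      qed
      then show "Fn z = 0" unfolding Fn_def using Pm_zero_not_weyl[OF x] by simp
    qed
  qed
  have c0: "c a u b = 0" if "a < N" "b < N" "u \<le> L" for a u b
  proof -
    have "L < x (Suc b) - int N" using xL[of "Suc b"] that by simp
    then show ?thesis unfolding c_def using that by (intro Hf_wm_zero) auto
  qed
  have cs: "c (Suc a) u b = c a (u+1) b - c a u b" for a u b
  proof -
    have "Hf (wm q m) (int (Suc a) - int b) = nabla (Hf (wm q m) (int a - int b))"
      using Hf_succ[OF wm_lsupp, of q m "int a - int b"] by (simp add: algebra_simps)
    then show ?thesis unfolding c_def nabla_def by (simp add: algebra_simps)
  qed
  have ym: "1 \<le> n \<Longrightarrow> n < N \<Longrightarrow> y n \<le> y (Suc n)" for n using y unfolding weyl_def by simp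
  have FnD: "Fn z = (1-q) ^ N * ((\<Prod>n\<in>{1..N}. om q y n (z n)) * detr N (\<lambda>a. if a < N then c a (z (Suc a)) else (\<lambda>_. 0)))"
    if z: "z \<in> DomSet L y N" for z
  proof -
    have "Pm q m N x z = Dm q m N x z" using Suc.IH DomSet_weyl[OF z] by simp
    also have "\<dots> = detr N (\<lambda>a. if a < N then c a (z (Suc a)) else (\<lambda>_. 0))"
      unfolding Dm_def c_def by (rule detr_cong) simp
    finally have P: "Pm q m N x z = detr N (\<lambda>a. if a < N then c a (z (Suc a)) else (\<lambda>_. 0))" .
    have "Qk q N z y = (\<Prod>n\<in>{1..N}. (1-q) * om q y n (z n))"
      unfolding Qk_def
    proof (rule prod.cong[OF refl])
      fix n assume n: "n \<in> {1..N}"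
      have zy: "z n \<le> y n" using z n by (auto simp: DomSet_def)
      have "bnd z y n \<le> y n"
      proof (cases "n = 1")
        case True then show ?thesis using zy by (simp add: bnd_def)
      next
        case False then have "y (n - 1) \<le> y n" using ym[of "n-1"] n by auto
        then show ?thesis using zy False by (simp add: bnd_def)
      qed
      moreover have "om q y n (z n) = q ^ nat (y n - bnd z y n)" by (simp add: om_def bnd_def)
      ultimately show "(if bnd z y n \<le> y n then (1-q) * q ^ nat (y n - bnd z y n) else 0) = (1-q) * om q y n (z n)"
        by simp
    qed
    also have "\<dots> = (1-q) ^ N * (\<Prod>n\<in>{1..N}. om q y n (z n))" by (simp add: prod.distrib)
    finally show ?thesis unfolding Fn_def P by simp
  qed
  have conv: "(1-q) * Rrow q L y c a b = Hf (wm q (Suc m)) (int a - int b) (y (Suc a) - x (Suc b))"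
    if ab: "a < N" "b < N" for a b
  proof -
    let ?k = "int a - int b"
    have xb: "L < x (Suc b) - int N" using xL[of "Suc b"] ab by simp
    have "(\<Sum>u\<in>{L..y (Suc a)}. (1-q) * q ^ nat (y (Suc a) - u) * Hf (wm q m) ?k (u - x (Suc b)))
        = Hf (wm q (Suc m)) ?k (y (Suc a) - x (Suc b))"
    proof (rule conv_sum[where g = "\<lambda>u. Hf (wm q m) ?k (u - x (Suc b))" and g' = "\<lambda>u. Hf (wm q (Suc m)) ?k (u - x (Suc b))"])
      fix u :: int assume "u \<le> L"
      then have "u - x (Suc b) < - \<bar>?k\<bar>" using xb ab by auto
      then show "Hf (wm q m) ?k (u - x (Suc b)) = 0" "Hf (wm q (Suc m)) ?k (u - x (Suc b)) = 0"
        by (simp_all add: Hf_wm_zero)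
    next
      fix u
      show "Hf (wm q (Suc m)) ?k (u - x (Suc b)) = q * Hf (wm q (Suc m)) ?k (u - 1 - x (Suc b)) + (1-q) * Hf (wm q m) ?k (u - x (Suc b))"
        using Hf_rec[where f="wm q m" and f'="wm q (Suc m)" and q=q and k="?k" and t="u - x (Suc b)", OF wm_lsupp wm_lsupp wm_rec]
        by (simp add: algebra_simps)
    qed
    then show ?thesis unfolding Rrow_def c_def by (simp add: sum_distrib_left algebra_simps)
  qed
  have "Pm q (Suc m) N x y = (\<Sum>z\<in>Zs N x y. Fn z)" unfolding Fn_def by (rule markov[OF q])
  also have "\<dots> = (\<Sum>z\<in>DomSet L y N. Fn z)" using s1 s2 by simp
  also have "\<dots> = (1-q) ^ N * (\<Sum>z\<in>DomSet L y N. (\<Prod>n\<in>{1..N}. om q y n (z n)) * detr N (\<lambda>a. if a < N then c a (z (Suc a)) else (\<lambda>_. 0)))"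
    by (simp add: FnD sum_distrib_left)
  also have "(\<Sum>z\<in>DomSet L y N. (\<Prod>n\<in>{1..N}. om q y n (z n)) * detr N (\<lambda>a. if a < N then c a (z (Suc a)) else (\<lambda>_. 0)))
      = detr N (\<lambda>a. if a < N then Rrow q L y c a else (\<lambda>_. 0))"
    by (rule key) (use c0 cs ym in auto)
  also have "(1-q) ^ N * \<dots> = detr N (\<lambda>a b. (1-q) * (if a < N then Rrow q L y c a else (\<lambda>_. 0)) b)"
    by (simp add: detr_smult)
  also have "\<dots> = Dm q (Suc m) N x y"
    unfolding Dm_def by (rule detr_cong) (simp add: conv)
  finally show ?case .
qed

theorem proposition1:
  fixes q :: real and N m :: nat and x y :: "nat \<Rightarrow> int"
  assumes "0 < q" and "q < 1" and "1 \<le> N" and "1 \<le> m"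
    and "weyl N x" and "weyl N y"
  shows "measure_pmf.prob (weights q m N) {\<omega>. \<forall>n\<in>{1..N}. LPP \<omega> x m n = y n}
         = det (mat N N (\<lambda>(i, j). F q m (int i - int j)
                   (tilde y (N - i) - tilde x (N - j))))"
proof -
  let ?E = "\<lambda>a b. Hf (wm q m) (int a - int b) (y (Suc a) - x (Suc b))"
  have "det (mat N N (\<lambda>(i, j). F q m (int i - int j) (tilde y (N - i) - tilde x (N - j))))
      = detr N (\<lambda>i j. F q m (int i - int j) (tilde y (N - i) - tilde x (N - j)))"
    unfolding detr_def by simp
  also have "\<dots> = detr N (\<lambda>i j. ?E (N - 1 - i) (N - 1 - j))"
  proof (rule detr_cong)
    fix i j assume ij: "i < N" "j < N"
    have wm: "wm q m = w q m" using assms(4) by (simp add: wm_def)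
    have e1: "int (N - 1 - i) - int (N - 1 - j) = - (int i - int j)" using ij by simp
    have e2: "Suc (N - 1 - i) = N - i" "Suc (N - 1 - j) = N - j" using ij by auto
    have e3: "(int i - int j) - (tilde y (N - i) - tilde x (N - j)) = y (N - i) - x (N - j)"
      using ij by (simp add: tilde_def of_nat_diff)
    show "F q m (int i - int j) (tilde y (N - i) - tilde x (N - j)) = ?E (N - 1 - i) (N - 1 - j)"
      unfolding F_def H_Hf wm e1 e2 e3 ..
  qed
  also have "\<dots> = detr N ?E" by (rule detr_rev)
  also have "\<dots> = Pm q m N x y" using main[OF assms(1,2,5,6)] by (simp add: Dm_def)
  finally show ?thesis unfolding Pm_def by simp
qed

end
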